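(* Let $\kappa$ be a regular cardinal and let $A,B$ be meet-semilattices with $A\subseteq B\subseteq \mathcal{BL} A$, where $A$ is identified with $\{{\downarrow}a:a\in A\}$, $A$ is a sub-meet-semilattice of $B$ and $B$ is a sub-meet-semilattice of $\mathcal{BL} A$. The following are equivalent: (1) $B$ is a $\kappa$-frame; (2) $B$ is a sub-$\kappa$-frame of $\mathcal{BL} A$ (i.e., closed under finite meets and under joins of fewer than $\kappa$ elements computed in $\mathcal{BL} A$); (3) the sub-$\kappa$-frame of $\mathcal{BL} A$ generated by $B$ equals $B$.
   Context: A meet-semilattice is a poset with all finite meets. For $S\subseteq A$ with $\bigvee S$ existing in $A$, the join is distributive if $a\wedge\bigvee S=\bigvee\{a\wedge s:s\in S\}$ for all $a\in A$. A D-ideal is a downset $E$ with $\bigvee S\in E$ whenever $S\subseteq E$ has a distributive join; $\mathcal{BL} A$ is the frame of D-ideals of $A$ ordered by inclusion, into which $A$ embeds via $a\mapsto{\downarrow}a$. For a regular cardinal $\kappa$, a $\kappa$-set is a set of cardinality $<\kappa$ and a $\kappa$-join is a join of a $\kappa$-set. A meet-semilattice is $\kappa$-complete if all $\kappa$-joins exist, $\kappa$JD if every existing $\kappa$-join is distributive, and a $\kappa$-frame if it is both $\kappa$-complete and $\kappa$JD. *)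

theory Defs
  imports Main
begin

definition is_join :: "'a::order set \<Rightarrow> 'a \<Rightarrow> bool" where
  "is_join S x \<longleftrightarrow> (\<forall>s\<in>S. s \<le> x) \<and> (\<forall>y. (\<forall>s\<in>S. s \<le> y) \<longrightarrow> x \<le> y)"

definition distributive_join :: "'a::semilattice_inf set \<Rightarrow> 'a \<Rightarrow> bool" where
  "distributive_join S x \<longleftrightarrow> is_join S x \<and> (\<forall>a. is_join ((\<lambda>s. inf a s) ` S) (inf a x))"

definition D_ideal :: "'a::semilattice_inf set \<Rightarrow> bool" where
  "D_ideal E \<longleftrightarrow> (\<forall>x y. x \<in> E \<longrightarrow> y \<le> x \<longrightarrow> y \<in> E)
     \<and> (\<forall>S x. S \<subseteq> E \<longrightarrow> distributive_join S x \<longrightarrow> x \<in> E)"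

text \<open>The frame BL A of D-ideals of A (A = the whole type), ordered by inclusion.\<close>
definition BL :: "'a::semilattice_inf set set" where
  "BL = {E. D_ideal E}"

definition down :: "'a::order \<Rightarrow> 'a set" where
  "down a = {y. y \<le> a}"

definition join_in :: "'x set set \<Rightarrow> 'x set set \<Rightarrow> 'x set \<Rightarrow> bool" where
  "join_in P S X \<longleftrightarrow> X \<in> P \<and> (\<forall>s\<in>S. s \<subseteq> X) \<and> (\<forall>Y\<in>P. (\<forall>s\<in>S. s \<subseteq> Y) \<longrightarrow> X \<subseteq> Y)"

definition kappa_set :: "'c rel \<Rightarrow> 'y set \<Rightarrow> bool" where
  "kappa_set k S \<longleftrightarrow> (card_of S, k) \<in> ordLess"

text \<open>For a family P closed under binary intersection (so binary meet is \<inter>).\<close>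
definition kappa_complete :: "'c rel \<Rightarrow> 'x set set \<Rightarrow> bool" where
  "kappa_complete k P \<longleftrightarrow> (\<forall>S. S \<subseteq> P \<longrightarrow> kappa_set k S \<longrightarrow> (\<exists>X. join_in P S X))"

definition kappa_JD :: "'c rel \<Rightarrow> 'x set set \<Rightarrow> bool" where
  "kappa_JD k P \<longleftrightarrow> (\<forall>S X. S \<subseteq> P \<longrightarrow> kappa_set k S \<longrightarrow> join_in P S X \<longrightarrow>
       (\<forall>a\<in>P. join_in P ((\<lambda>s. a \<inter> s) ` S) (a \<inter> X)))"

definition kappa_frame :: "'c rel \<Rightarrow> 'x set set \<Rightarrow> bool" where
  "kappa_frame k P \<longleftrightarrow> kappa_complete k P \<and> kappa_JD k P"

definition sub_meet_BL :: "'a::semilattice_inf set set \<Rightarrow> bool" where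
  "sub_meet_BL C \<longleftrightarrow> C \<subseteq> BL \<and> UNIV \<in> C \<and> (\<forall>x\<in>C. \<forall>y\<in>C. x \<inter> y \<in> C)"

definition sub_kappa_frame_BL :: "'c rel \<Rightarrow> 'a::semilattice_inf set set \<Rightarrow> bool" where
  "sub_kappa_frame_BL k C \<longleftrightarrow> sub_meet_BL C \<and>
     (\<forall>S X. S \<subseteq> C \<longrightarrow> kappa_set k S \<longrightarrow> join_in BL S X \<longrightarrow> X \<in> C)"

definition generated_sub_kappa_frame :: "'c rel \<Rightarrow> 'a::semilattice_inf set set \<Rightarrow> 'a set set" where
  "generated_sub_kappa_frame k B = \<Inter>{C. B \<subseteq> C \<and> sub_kappa_frame_BL k C}"

end

theory Submission
  imports Defs
begin

lemma D_ideal_Inter: "(\<forall>E\<in>F. D_ideal E) \<Longrightarrow> D_ideal (\<Inter>F)"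
  unfolding D_ideal_def
proof (intro conjI allI impI)
  fix x y assume "\<forall>E\<in>F. (\<forall>x y. x \<in> E \<longrightarrow> y \<le> x \<longrightarrow> y \<in> E) \<and>
         (\<forall>S x. S \<subseteq> E \<longrightarrow> distributive_join S x \<longrightarrow> x \<in> E)" "x \<in> \<Inter>F" "y \<le> x"
  then show "y \<in> \<Inter>F" by (meson InterE InterI)
next
  fix S x assume h: "\<forall>E\<in>F. (\<forall>x y. x \<in> E \<longrightarrow> y \<le> x \<longrightarrow> y \<in> E) \<and>
         (\<forall>S x. S \<subseteq> E \<longrightarrow> distributive_join S x \<longrightarrow> x \<in> E)" "S \<subseteq> \<Inter>F" "distributive_join S x"
  show "x \<in> \<Inter>F"
  proof
    fix E assume "E \<in> F"
    then show "x \<in> E" using h by (meson Inter_lower subset_trans)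
  qed
qed

lemma D_ideal_down: "D_ideal E \<Longrightarrow> x \<in> E \<Longrightarrow> y \<le> x \<Longrightarrow> y \<in> E"
  unfolding D_ideal_def by metis

lemma D_ideal_join: "D_ideal E \<Longrightarrow> S \<subseteq> E \<Longrightarrow> distributive_join S x \<Longrightarrow> x \<in> E"
  unfolding D_ideal_def by metis
lemma D_ideal_UNIV: "D_ideal UNIV"
  using D_ideal_Inter[of "{}"] by simp

lemma D_ideal_Int: "D_ideal x \<Longrightarrow> D_ideal y \<Longrightarrow> D_ideal (x \<inter> y)"
  using D_ideal_Inter[of "{x,y}"] by simp

lemma BL_join:
  assumes "S \<subseteq> BL"
  shows "join_in BL S (\<Inter>{Y\<in>BL. \<forall>s\<in>S. s \<subseteq> Y})"
  unfolding join_in_def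
proof (intro conjI)
  show "\<Inter>{Y\<in>BL. \<forall>s\<in>S. s \<subseteq> Y} \<in> BL"
    unfolding BL_def by (rule CollectI, rule D_ideal_Inter) auto
qed auto

lemma kappa_set_image: "kappa_set k S \<Longrightarrow> kappa_set k (f ` S)"
  unfolding kappa_set_def using card_of_image ordLeq_ordLess_trans by blast

lemma BL_distrib:
  fixes a :: "'a::semilattice_inf set"
  assumes aBL: "a \<in> BL" and SBL: "S \<subseteq> BL" and JBL: "J \<in> BL"
    and Jub: "\<forall>s\<in>S. a \<inter> s \<subseteq> J" and XBL: "X \<in> BL"
    and Xle: "\<forall>Y\<in>BL. (\<forall>s\<in>S. s \<subseteq> Y) \<longrightarrow> X \<subseteq> Y"
  shows "a \<inter> X \<subseteq> J"
proof -
  have Da: "D_ideal a" using aBL unfolding BL_def by simp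
  have DJ: "D_ideal J" using JBL unfolding BL_def by simp
  define E where "E = {x. down x \<inter> a \<subseteq> J}"
  have "D_ideal E"
    unfolding D_ideal_def
  proof (intro conjI allI impI)
    fix x y assume "x \<in> E" "y \<le> x"
    then have "down y \<subseteq> down x" unfolding down_def using order_trans by blast
    then show "y \<in> E" using \<open>x \<in> E\<close> unfolding E_def by blast
  next
    fix T t assume TE: "T \<subseteq> E" and dj: "distributive_join T t"
    show "t \<in> E" unfolding E_def
    proof (rule CollectI, rule subsetI)
      fix y assume y: "y \<in> down t \<inter> a"
      then have yt: "y \<le> t" and ya: "y \<in> a" unfolding down_def by auto
      have "distributive_join (inf y ` T) y"
        unfolding distributive_join_def
      proof (intro conjI allI)
        have "is_join (inf y ` T) (inf y t)" using dj unfolding distributive_join_def by blast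
        then show "is_join (inf y ` T) y" using yt by (simp add: inf_absorb1)
      next
        fix c
        have "is_join (inf (inf c y) ` T) (inf (inf c y) t)"
          using dj unfolding distributive_join_def by blast
        moreover have "inf (inf c y) t = inf c y" using yt
          using inf_absorb1[OF yt] by (simp add: inf_assoc)
        moreover have "inf (inf c y) ` T = inf c ` inf y ` T"
          by (simp add: image_image inf_assoc)
        ultimately show "is_join (inf c ` inf y ` T) (inf c y)" by simp
      qed
      moreover have "inf y ` T \<subseteq> J"
      proof
        fix z assume "z \<in> inf y ` T"
        then obtain t' where t': "t' \<in> T" "z = inf y t'" by auto
        have "z \<in> a" using D_ideal_down[OF Da ya] t' by simp
        moreover have "z \<in> down t'" using t' unfolding down_def by simp
        ultimately show "z \<in> J" using TE t' unfolding E_def by blast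
      qed
      ultimately show "y \<in> J" using D_ideal_join[OF DJ] by metis
    qed
  qed
  moreover have "\<forall>s\<in>S. s \<subseteq> E"
  proof (intro ballI subsetI)
    fix s x assume s: "s \<in> S" and x: "x \<in> s"
    have Ds: "D_ideal s" using s SBL unfolding BL_def by auto
    show "x \<in> E" unfolding E_def
    proof (rule CollectI, rule subsetI)
      fix y assume "y \<in> down x \<inter> a"
      then have "y \<in> s \<inter> a" using D_ideal_down[OF Ds x] unfolding down_def by auto
      then show "y \<in> J" using Jub s by blast
    qed
  qed
  ultimately have "X \<subseteq> E" using Xle unfolding BL_def by blast
  then show ?thesis unfolding E_def down_def by auto
qed

lemma join_in_mem: "join_in P S X \<Longrightarrow> X \<in> P"
  unfolding join_in_def by (elim conjE)
lemma join_in_ub: "join_in P S X \<Longrightarrow> s \<in> S \<Longrightarrow> s \<subseteq> X"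
  unfolding join_in_def by (elim conjE) (erule bspec)
lemma join_in_least: "join_in P S X \<Longrightarrow> Y \<in> P \<Longrightarrow> (\<And>s. s \<in> S \<Longrightarrow> s \<subseteq> Y) \<Longrightarrow> X \<subseteq> Y"
  unfolding join_in_def by (elim conjE) (erule ballE, auto)

lemma join_in_BL_B:
  assumes "B \<subseteq> BL" "join_in BL S X" "X \<in> B"
  shows "join_in B S X"
  using assms unfolding join_in_def by (meson subsetD)

lemma two_imp_one:
  fixes B :: "'a::semilattice_inf set set"
  assumes "sub_kappa_frame_BL k B"
  shows "kappa_frame k B"
proof -
  have BBL: "B \<subseteq> BL" and cl: "\<And>x y. x\<in>B \<Longrightarrow> y\<in>B \<Longrightarrow> x \<inter> y \<in> B"
    and jc: "\<And>S X. S \<subseteq> B \<Longrightarrow> kappa_set k S \<Longrightarrow> join_in BL S X \<Longrightarrow> X \<in> B"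
    using assms unfolding sub_kappa_frame_BL_def sub_meet_BL_def by simp_all
  have compl: "kappa_complete k B"
    unfolding kappa_complete_def
  proof (intro allI impI)
    fix S assume S: "S \<subseteq> B" "kappa_set k S"
    let ?X = "\<Inter>{Y\<in>BL. \<forall>s\<in>S. s \<subseteq> Y}"
    have j: "join_in BL S ?X" by (rule BL_join, rule subset_trans[OF S(1) BBL])
    have XB: "?X \<in> B" using jc[OF S j] .
    have "join_in B S ?X" by (rule join_in_BL_B[OF BBL j XB])
    then show "\<exists>X. join_in B S X" by (rule exI)
  qed
  have "kappa_JD k B"
    unfolding kappa_JD_def
  proof (intro allI impI ballI)
    fix S X a assume S: "S \<subseteq> B" "kappa_set k S" and jX: "join_in B S X" and a: "a \<in> B"
    let ?X = "\<Inter>{Y\<in>BL. \<forall>s\<in>S. s \<subseteq> Y}"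
    have SBL: "S \<subseteq> BL" by (rule subset_trans[OF S(1) BBL])
    have j: "join_in BL S ?X" by (rule BL_join[OF SBL])
    have XB: "?X \<in> B" using jc[OF S j] .
    have XX: "X \<subseteq> ?X" by (rule join_in_least[OF jX XB join_in_ub[OF j]])
    let ?T = "(\<lambda>s. a \<inter> s) ` S"
    let ?J = "\<Inter>{Y\<in>BL. \<forall>s\<in>?T. s \<subseteq> Y}"
    have TB: "?T \<subseteq> B"
    proof (rule image_subsetI)
      fix s assume "s \<in> S" then have "s \<in> B" using S(1) by (rule subsetD[rotated])
      then show "a \<inter> s \<in> B" by (rule cl[OF a])
    qed
    have TBL: "?T \<subseteq> BL" by (rule subset_trans[OF TB BBL])
    have jJ: "join_in BL ?T ?J" by (rule BL_join[OF TBL])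
    have JB: "?J \<in> B" using jc[OF TB kappa_set_image[OF S(2)] jJ] .
    have aBL: "a \<in> BL" using a BBL by (meson subsetD)
    have JBL: "?J \<in> BL" by (rule join_in_mem[OF jJ])
    have Jub: "\<forall>s\<in>S. a \<inter> s \<subseteq> ?J" using join_in_ub[OF jJ] by blast
    have XBL: "?X \<in> BL" by (rule join_in_mem[OF j])
    have Xle: "\<forall>Y\<in>BL. (\<forall>s\<in>S. s \<subseteq> Y) \<longrightarrow> ?X \<subseteq> Y" using join_in_least[OF j] by blast
    have "a \<inter> ?X \<subseteq> ?J" by (rule BL_distrib[OF aBL SBL JBL Jub XBL Xle])
    then have sub: "a \<inter> X \<subseteq> ?J" by (rule subset_trans[OF Int_mono[OF order_refl XX]])
    show "join_in B ?T (a \<inter> X)"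
      unfolding join_in_def
    proof (intro conjI ballI impI)
      show "a \<inter> X \<in> B" by (rule cl[OF a join_in_mem[OF jX]])
      show "\<And>s. s \<in> ?T \<Longrightarrow> s \<subseteq> a \<inter> X" using join_in_ub[OF jX] by blast
      fix Y assume Y: "Y \<in> B" "\<forall>s\<in>?T. s \<subseteq> Y"
      have "Y \<in> BL" using Y BBL by (meson subsetD)
      then have "?J \<subseteq> Y" using Y(2) by (intro join_in_least[OF jJ]) auto
      then show "a \<inter> X \<subseteq> Y" using sub by blast
    qed
  qed
  then show ?thesis using compl unfolding kappa_frame_def by simp
qed

lemma one_imp_two:
  fixes B :: "'a::semilattice_inf set set"
  assumes fr: "kappa_frame k B" and dB: "range down \<subseteq> B" and sm: "sub_meet_BL B"
  shows "sub_kappa_frame_BL k B"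
  unfolding sub_kappa_frame_BL_def
proof (intro conjI allI impI sm)
  have BBL: "B \<subseteq> BL" using sm unfolding sub_meet_BL_def by blast
  fix S X assume S: "S \<subseteq> B" "kappa_set k S" and jX: "join_in BL S X"
  obtain Y where jY: "join_in B S Y" using fr S unfolding kappa_frame_def kappa_complete_def by blast
  have JD: "\<And>a. a \<in> B \<Longrightarrow> join_in B ((\<lambda>s. a \<inter> s) ` S) (a \<inter> Y)"
    using fr S jY unfolding kappa_frame_def kappa_JD_def by blast
  have DX: "D_ideal X" using jX unfolding join_in_def BL_def by blast
  have DY: "D_ideal Y" using jY BBL unfolding join_in_def BL_def by blast
  have DS: "\<And>s. s \<in> S \<Longrightarrow> D_ideal s" using S BBL unfolding BL_def by blast
  have XY: "X \<subseteq> Y" using jX jY BBL unfolding join_in_def by blast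
  have "Y \<subseteq> X"
  proof
    fix y assume yY: "y \<in> Y"
    let ?U = "{t\<in>\<Union>S. t \<le> y}"
    have key: "is_join {z\<in>\<Union>S. z \<le> inf c y} (inf c y)" for c
      unfolding is_join_def
    proof (intro conjI allI impI ballI)
      show "\<And>s. s \<in> {z\<in>\<Union>S. z \<le> inf c y} \<Longrightarrow> s \<le> inf c y" by blast
      fix w assume w: "\<forall>s\<in>{z\<in>\<Union>S. z \<le> inf c y}. s \<le> w"
      have cyY: "inf c y \<in> Y" using D_ideal_down[OF DY yY] by simp
      have "down (inf c y) \<in> B" using dB by blast
      from JD[OF this] have jj: "join_in B ((\<lambda>s. down (inf c y) \<inter> s) ` S) (down (inf c y) \<inter> Y)" .
      have eq: "down (inf c y) \<inter> Y = down (inf c y)"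
        using D_ideal_down[OF DY cyY] unfolding down_def by blast
      have "down w \<in> B" using dB by blast
      moreover have "\<forall>s\<in>(\<lambda>s. down (inf c y) \<inter> s) ` S. s \<subseteq> down w"
        using w unfolding down_def by blast
      ultimately have "down (inf c y) \<subseteq> down w" using jj eq unfolding join_in_def by metis
      then show "inf c y \<le> w" unfolding down_def by blast
    qed
    have img: "inf c ` ?U = {z\<in>\<Union>S. z \<le> inf c y}" for c
    proof
      show "inf c ` ?U \<subseteq> {z\<in>\<Union>S. z \<le> inf c y}"
      proof
        fix z assume "z \<in> inf c ` ?U"
        then obtain t s where t: "s \<in> S" "t \<in> s" "t \<le> y" "z = inf c t" by blast
        have "z \<in> s" using D_ideal_down[OF DS[OF t(1)] t(2)] t(4) by simp
        moreover have "z \<le> inf c y" using t(3,4) by (simp add: inf.coboundedI2 le_infI1)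
        ultimately show "z \<in> {z\<in>\<Union>S. z \<le> inf c y}" using t(1) by blast
      qed
      show "{z\<in>\<Union>S. z \<le> inf c y} \<subseteq> inf c ` ?U"
      proof
        fix z assume z: "z \<in> {z\<in>\<Union>S. z \<le> inf c y}"
        then have "z = inf c z" "z \<le> y" by (simp_all add: inf_absorb2 le_inf_iff)
        then show "z \<in> inf c ` ?U" using z by blast
      qed
    qed
    have "distributive_join ?U y"
      unfolding distributive_join_def
    proof (intro conjI allI)
      have "?U = {z\<in>\<Union>S. z \<le> inf y y}" by simp
      then show "is_join ?U y" using key[of y] by simp
      fix c show "is_join (inf c ` ?U) (inf c y)" using key img by simp
    qed
    moreover have "?U \<subseteq> X" using jX unfolding join_in_def by blast
    ultimately show "y \<in> X" using D_ideal_join[OF DX] by blast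
  qed
  then have "X = Y" using XY by blast
  then show "X \<in> B" using jY unfolding join_in_def by blast
qed

lemma skf_intro:
  "C \<subseteq> BL \<Longrightarrow> UNIV \<in> C \<Longrightarrow> \<forall>x\<in>C. \<forall>y\<in>C. x \<inter> y \<in> C \<Longrightarrow>
   \<forall>S X. S \<subseteq> C \<longrightarrow> kappa_set k S \<longrightarrow> join_in BL S X \<longrightarrow> X \<in> C \<Longrightarrow> sub_kappa_frame_BL k C"
  unfolding sub_kappa_frame_BL_def sub_meet_BL_def by (intro conjI)

lemma gen_lemma:
  fixes B :: "'a::semilattice_inf set set"
  assumes BBL: "B \<subseteq> BL"
  shows "sub_kappa_frame_BL k B \<longleftrightarrow> generated_sub_kappa_frame k B = B"
proof
  assume h: "sub_kappa_frame_BL k B"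
  show "generated_sub_kappa_frame k B = B"
    unfolding generated_sub_kappa_frame_def
  proof (rule equalityI)
    show "\<Inter>{C. B \<subseteq> C \<and> sub_kappa_frame_BL k C} \<subseteq> B" using h by (intro Inter_lower) simp
    show "B \<subseteq> \<Inter>{C. B \<subseteq> C \<and> sub_kappa_frame_BL k C}" by (rule Inter_greatest) simp
  qed
next
  assume g: "generated_sub_kappa_frame k B = B"
  let ?F = "{C. B \<subseteq> C \<and> sub_kappa_frame_BL k C}"
  have BLF: "BL \<in> ?F"
  proof -
    have "UNIV \<in> (BL :: 'a set set)" unfolding BL_def using D_ideal_UNIV by blast
    moreover have "\<forall>x\<in>(BL :: 'a set set). \<forall>y\<in>BL. x \<inter> y \<in> BL"
      unfolding BL_def using D_ideal_Int by blast
    moreover have "\<forall>S X. S \<subseteq> BL \<longrightarrow> kappa_set k S \<longrightarrow> join_in BL S X \<longrightarrow> X \<in> (BL :: 'a set set)"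
      using join_in_mem by blast
    ultimately have "sub_kappa_frame_BL k (BL :: 'a set set)"
      unfolding sub_kappa_frame_BL_def sub_meet_BL_def by simp
    then show ?thesis using BBL by simp
  qed
  have i1: "\<Inter>?F \<subseteq> BL" using BLF by (rule Inter_lower)
  have i2: "UNIV \<in> \<Inter>?F"
  proof (rule InterI)
    fix C assume "C \<in> ?F" then show "UNIV \<in> C" unfolding sub_kappa_frame_BL_def sub_meet_BL_def by simp
  qed
  have i3: "\<forall>x\<in>\<Inter>?F. \<forall>y\<in>\<Inter>?F. x \<inter> y \<in> \<Inter>?F"
  proof (intro ballI InterI)
    fix x y C assume "x \<in> \<Inter>?F" "y \<in> \<Inter>?F" "C \<in> ?F"
    then have "x \<in> C" "y \<in> C" "\<forall>x\<in>C. \<forall>y\<in>C. x \<inter> y \<in> C"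
      unfolding sub_kappa_frame_BL_def sub_meet_BL_def by auto
    then show "x \<inter> y \<in> C" by blast
  qed
  have i4: "\<forall>S X. S \<subseteq> \<Inter>?F \<longrightarrow> kappa_set k S \<longrightarrow> join_in BL S X \<longrightarrow> X \<in> \<Inter>?F"
  proof (intro allI impI InterI)
    fix S X C assume h: "S \<subseteq> \<Inter>?F" "kappa_set k S" "join_in BL S X" "C \<in> ?F"
    have "S \<subseteq> C" by (rule subset_trans[OF h(1) Inter_lower[OF h(4)]])
    moreover have "\<forall>S X. S \<subseteq> C \<longrightarrow> kappa_set k S \<longrightarrow> join_in BL S X \<longrightarrow> X \<in> C"
      using h(4) unfolding sub_kappa_frame_BL_def by simp
    ultimately show "X \<in> C" using h(2,3) by blast
  qed
  have "sub_kappa_frame_BL k (\<Inter>?F)" by (rule skf_intro[OF i1 i2 i3 i4])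
  then show "sub_kappa_frame_BL k B" using g unfolding generated_sub_kappa_frame_def by simp
qed

theorem theorem3p7:
  fixes k :: "'c rel" and B :: "('a::{semilattice_inf, order_top}) set set"
  assumes "Cinfinite k" and "regularCard k"
    and "range down \<subseteq> B"
    and "sub_meet_BL B"
  shows "(kappa_frame k B \<longleftrightarrow> sub_kappa_frame_BL k B)
       \<and> (sub_kappa_frame_BL k B \<longleftrightarrow> generated_sub_kappa_frame k B = B)"
proof -
  have BBL: "B \<subseteq> BL" using assms(4) unfolding sub_meet_BL_def by simp
  have "kappa_frame k B \<longleftrightarrow> sub_kappa_frame_BL k B"
    using one_imp_two[OF _ assms(3,4)] two_imp_one by (rule iffI)
  then show ?thesis using gen_lemma[OF BBL] by simp
qed

end
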